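(* Let $\Omega$, $\mathcal K$ be as in the context, let $\mathcal B$ be a basis of the chain complex of $\mathcal K$, let $k\in\{0,1,2\}$, and let $\mathcal M_k=\{(\sigma_1,\tau_1),\dots,(\sigma_n,\tau_n)\}$ be an acyclic matching of $k$-chains on $\mathcal B$, ordered so that $\sigma_i$ is not incident to any of $\tau_{i+1},\dots,\tau_n$. Let $\mathcal B'=\mathcal B\cdot\mathcal M_k$ and let $\mathcal D_k=\{\sigma_1,\dots,\sigma_n\}$, $\mathcal U_{k+1}=\{\tau_1,\dots,\tau_n\}$, $\mathcal C_k=\mathcal B'_k\setminus\mathcal D_k$, $\mathcal C_{k+1}=\mathcal B'_{k+1}\setminus\mathcal U_{k+1}$. Then the matrix $\mathbf D_k$ with respect to the basis $\mathcal B'$ has the block form $$\mathbf D_k=\begin{pmatrix}\mathbf D_k[\mathcal U_{k+1}\times\mathcal D_k] & \mathbf D_k[\mathcal U_{k+1}\times\mathcal C_k]\\ 0 & \mathbf D_k[\mathcal C_{k+1}\times\mathcal C_k]\end{pmatrix},$$ where $\mathbf D_k[\mathcal U_{k+1}\times\mathcal D_k]$ is upper triangular and invertible.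
   Context: $\Omega\subset\mathbb R^3$ is a closed bounded polyhedral domain with Lipschitz boundary, homeomorphic to a closed 3-ball; $\mathcal K$ is a polyhedral cell complex (regular cell complex with polyhedral cells) subdividing $\Omega$ with oriented cells. $C_k$ is the real vector space of $k$-chains with canonical basis the $k$-cells; $\partial_{k+1}:C_{k+1}\to C_k$ is the boundary operator (on a cell $\tau$, $\partial\tau=\sum_\rho w_\rho\rho$ with $w_\rho=\pm1$ according to induced orientation if $\rho\subset\partial\tau$, else $0$); $\langle\cdot,\cdot\rangle$ is the scalar product making the canonical basis orthonormal. A basis $\mathcal B=\bigcup_k\mathcal B_k$ consists of bases of each $C_k$. For $\sigma\in\mathcal B_k$, $\tau\in\mathcal B_{k+1}$, $\sigma\prec\tau$ (incident) iff $\langle\sigma,\partial_{k+1}\tau\rangle\ne0$. With respect to a basis $\mathcal B$, $\mathbf D_k$ is the matrix with rows indexed by $\mathcal B_{k+1}$, columns by $\mathcal B_k$, entry $(\tau,\sigma)=\langle\sigma,\partial_{k+1}\tau\rangle$; for a partition of indices, $\mathbf A[I\times J]$ denotes the submatrix with rows in $I$, columns in $J$. A matching of $k$-chains on $\mathcal B$ is a set of pairs $(\sigma,\tau)$, $\sigma\in\mathcal B_k$, $\tau\in\mathcal B_{k+1}$, $\sigma\prec\tau$, each basis element in at most one pair; it is acyclic if there is no cycle $\tau_1\succ\sigma_1\prec\tau_2\succ\cdots\prec\tau_h\succ\sigma_h\prec\tau_1$ with $h\ge2$, $(\sigma_i,\tau_i)$ in the matching, $\tau_i$ distinct (such a matching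 admits an ordering as in the claim). Change of basis $\mathcal B\cdot\mathcal M_k$: set $\mathcal B^{(0)}=\mathcal B$; for $i=1,\dots,n$, $\mathcal B^{(i)}$ is obtained from $\mathcal B^{(i-1)}$ by leaving all elements unchanged except each element $\tau'\in\mathcal B^{(i-1)}_{k+1}$ not among $\tau_1,\dots,\tau_n$, which is replaced by $\tau'-\frac{\langle\sigma_i,\partial_{k+1}\tau'\rangle}{\langle\sigma_i,\partial_{k+1}\tau_i\rangle}\tau_i$; then $\mathcal B\cdot\mathcal M_k:=\mathcal B^{(n)}$ (again a basis, containing all $\sigma_i,\tau_i$). *)

theory Defs
  imports Main "Jordan_Normal_Form.Matrix"
begin

text \<open>Abstract cellular chain complex: cell k is the (finite) set of oriented k-cells,
  w (Suc k) tau rho is the incidence number (in {-1,0,1}) of the k-cell rho in the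
  boundary of the (k+1)-cell tau.\<close>

type_synonym 'c chain = "'c \<Rightarrow> real"

definition chains :: "'c set \<Rightarrow> 'c chain set" where
  "chains K = {c. \<forall>x. x \<notin> K \<longrightarrow> c x = 0}"

definition ip :: "'c set \<Rightarrow> 'c chain \<Rightarrow> 'c chain \<Rightarrow> real" where
  "ip K a b = (\<Sum>x\<in>K. a x * b x)"

definition bnd :: "(nat \<Rightarrow> 'c set) \<Rightarrow> (nat \<Rightarrow> 'c \<Rightarrow> 'c \<Rightarrow> real) \<Rightarrow> nat \<Rightarrow> 'c chain \<Rightarrow> 'c chain" where
  "bnd cell w k c = (\<lambda>\<rho>. if \<rho> \<in> cell k then (\<Sum>\<tau>\<in>cell (Suc k). c \<tau> * w (Suc k) \<tau> \<rho>) else 0)"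

text \<open>coef sigma tau = <sigma, d_{k+1} tau>, the (tau,sigma) entry of the matrix D_k\<close>
definition coef :: "(nat \<Rightarrow> 'c set) \<Rightarrow> (nat \<Rightarrow> 'c \<Rightarrow> 'c \<Rightarrow> real) \<Rightarrow> nat \<Rightarrow> 'c chain \<Rightarrow> 'c chain \<Rightarrow> real" where
  "coef cell w k \<sigma> \<tau> = ip (cell k) \<sigma> (bnd cell w k \<tau>)"

definition incident :: "(nat \<Rightarrow> 'c set) \<Rightarrow> (nat \<Rightarrow> 'c \<Rightarrow> 'c \<Rightarrow> real) \<Rightarrow> nat \<Rightarrow> 'c chain \<Rightarrow> 'c chain \<Rightarrow> bool" where
  "incident cell w k \<sigma> \<tau> \<longleftrightarrow> coef cell w k \<sigma> \<tau> \<noteq> 0"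

definition cell_complex :: "(nat \<Rightarrow> 'c set) \<Rightarrow> (nat \<Rightarrow> 'c \<Rightarrow> 'c \<Rightarrow> real) \<Rightarrow> bool" where
  "cell_complex cell w \<longleftrightarrow> (\<forall>k. finite (cell k)) \<and> (\<forall>k \<tau> \<rho>. w k \<tau> \<rho> \<in> {-1, 0, 1})"

definition is_basis :: "'c set \<Rightarrow> 'c chain set \<Rightarrow> bool" where
  "is_basis K B \<longleftrightarrow> finite B \<and> B \<subseteq> chains K
     \<and> (\<forall>a. (\<lambda>x. \<Sum>b\<in>B. a b * b x) = (\<lambda>x. 0) \<longrightarrow> (\<forall>b\<in>B. a b = 0))
     \<and> (\<forall>c\<in>chains K. \<exists>a. c = (\<lambda>x. \<Sum>b\<in>B. a b * b x))"

definition is_complex_basis :: "(nat \<Rightarrow> 'c set) \<Rightarrow> (nat \<Rightarrow> 'c chain set) \<Rightarrow> bool" where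
  "is_complex_basis cell B \<longleftrightarrow> (\<forall>k. is_basis (cell k) (B k))"

definition is_matching :: "(nat \<Rightarrow> 'c set) \<Rightarrow> (nat \<Rightarrow> 'c \<Rightarrow> 'c \<Rightarrow> real) \<Rightarrow> nat
     \<Rightarrow> (nat \<Rightarrow> 'c chain set) \<Rightarrow> ('c chain \<times> 'c chain) list \<Rightarrow> bool" where
  "is_matching cell w k B M \<longleftrightarrow> distinct (map fst M) \<and> distinct (map snd M)
     \<and> (\<forall>(\<sigma>,\<tau>)\<in>set M. \<sigma> \<in> B k \<and> \<tau> \<in> B (Suc k) \<and> incident cell w k \<sigma> \<tau>)"

text \<open>no cycle tau_1 > sigma_1 < tau_2 > ... < tau_h > sigma_h < tau_1, h >= 2, tau_i distinct\<close>
definition acyclic_matching :: "(nat \<Rightarrow> 'c set) \<Rightarrow> (nat \<Rightarrow> 'c \<Rightarrow> 'c \<Rightarrow> real) \<Rightarrow> nat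
     \<Rightarrow> (nat \<Rightarrow> 'c chain set) \<Rightarrow> ('c chain \<times> 'c chain) list \<Rightarrow> bool" where
  "acyclic_matching cell w k B M \<longleftrightarrow> is_matching cell w k B M \<and>
     \<not> (\<exists>h p. h \<ge> 2 \<and> (\<forall>i<h. p i \<in> set M) \<and> inj_on (\<lambda>i. snd (p i)) {..<h}
            \<and> (\<forall>i<h. incident cell w k (fst (p i)) (snd (p (Suc i mod h)))))"

text \<open>one step of the change of basis B . M_k, using the pair (sigma_i, tau_i); Us = {tau_1..tau_n}\<close>
definition cob_step :: "(nat \<Rightarrow> 'c set) \<Rightarrow> (nat \<Rightarrow> 'c \<Rightarrow> 'c \<Rightarrow> real) \<Rightarrow> nat \<Rightarrow> 'c chain set
     \<Rightarrow> (nat \<Rightarrow> 'c chain set) \<Rightarrow> 'c chain \<times> 'c chain \<Rightarrow> (nat \<Rightarrow> 'c chain set)" where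
  "cob_step cell w k Us B p = B (Suc k := (\<lambda>t. if t \<in> Us then t else
       (\<lambda>x. t x - coef cell w k (fst p) t / coef cell w k (fst p) (snd p) * snd p x)) ` B (Suc k))"

definition change_basis :: "(nat \<Rightarrow> 'c set) \<Rightarrow> (nat \<Rightarrow> 'c \<Rightarrow> 'c \<Rightarrow> real) \<Rightarrow> nat
     \<Rightarrow> (nat \<Rightarrow> 'c chain set) \<Rightarrow> ('c chain \<times> 'c chain) list \<Rightarrow> (nat \<Rightarrow> 'c chain set)" where
  "change_basis cell w k B M = foldl (cob_step cell w k (set (map snd M))) B M"

end

theory Submission
  imports Defs "Jordan_Normal_Form.Determinant"
begin

lemma inv_ut:
  fixes A :: "real mat"
  assumes A: "A \<in> carrier_mat n n" and ut: "upper_triangular A"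
    and d: "\<And>i. i < n \<Longrightarrow> A $$ (i,i) \<noteq> 0"
  shows "invertible_mat A"
proof -
  have "det A = (\<Prod>i = 0 ..< n. A $$ (i,i))"
    using det_upper_triangular[OF ut A] prod_list_diag_prod[of A] A by simp
  also have "\<dots> \<noteq> 0" using d by (simp add: prod_zero_iff)
  finally have "det A \<noteq> 0" .
  from det_non_zero_imp_unit[OF A this, unfolded Units_def, of "()"]
  obtain B where B: "B \<in> carrier_mat n n" and BA: "B * A = 1\<^sub>m n" and AB: "A * B = 1\<^sub>m n"
    by (auto simp: ring_mat_def)
  show ?thesis unfolding invertible_mat_def inverts_mat_def square_mat.simps
    using A B AB BA by auto
qed

lemma coef_lin:
  "coef cell w k s (\<lambda>x. t x - c * u x) = coef cell w k s t - c * coef cell w k s u"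
  unfolding coef_def ip_def bnd_def
  by (simp add: algebra_simps sum_subtractf sum_distrib_left sum_distrib_right)

theorem theorem7:
  fixes cell :: "nat \<Rightarrow> 'c set" and w :: "nat \<Rightarrow> 'c \<Rightarrow> 'c \<Rightarrow> real"
    and B :: "nat \<Rightarrow> 'c chain set" and k :: nat and M :: "('c chain \<times> 'c chain) list"
  assumes "cell_complex cell w"
    and "is_complex_basis cell B"
    and "k \<le> 2"
    and "acyclic_matching cell w k B M"
    and "\<forall>i j. i < j \<and> j < length M \<longrightarrow> \<not> incident cell w k (fst (M ! i)) (snd (M ! j))"
  shows "let B' = change_basis cell w k B M; n = length M;
             D = set (map fst M); U = set (map snd M);
             C = B' k - D; C1 = B' (Suc k) - U;
             A = mat n n (\<lambda>(i, j). coef cell w k (fst (M ! j)) (snd (M ! i)))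
         in D \<subseteq> B' k \<and> U \<subseteq> B' (Suc k)
            \<and> (\<forall>\<tau>\<in>C1. \<forall>\<sigma>\<in>D. coef cell w k \<sigma> \<tau> = 0)
            \<and> upper_triangular A \<and> invertible_mat A"
proof -
  define U where "U = set (map snd M)"
  define st where "st = cob_step cell w k U"
  have mt: "is_matching cell w k B M" using assms(4) unfolding acyclic_matching_def by blast
  have inM: "\<And>i. i < length M \<Longrightarrow> fst (M!i) \<in> B k \<and> snd (M!i) \<in> B (Suc k)
      \<and> coef cell w k (fst (M!i)) (snd (M!i)) \<noteq> 0"
  proof -
    fix i assume "i < length M"
    then have "M!i \<in> set M" by simp
    with mt show "fst (M!i) \<in> B k \<and> snd (M!i) \<in> B (Suc k)
      \<and> coef cell w k (fst (M!i)) (snd (M!i)) \<noteq> 0"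
      unfolding is_matching_def incident_def by (cases "M!i") fastforce
  qed
  have inv: "m \<le> length M \<Longrightarrow> foldl st B (take m M) k = B k
     \<and> U \<subseteq> foldl st B (take m M) (Suc k)
     \<and> (\<forall>\<tau>\<in>foldl st B (take m M) (Suc k) - U. \<forall>i<m. coef cell w k (fst (M!i)) \<tau> = 0)" for m
  proof (induction m)
    case 0
    have "U \<subseteq> B (Suc k)" using inM by (force simp: U_def in_set_conv_nth)
    then show ?case by simp
  next
    case (Suc m)
    let ?B = "foldl st B (take m M)"
    have m: "m < length M" using Suc by simp
    have IH: "?B k = B k" "U \<subseteq> ?B (Suc k)"
      "\<forall>\<tau>\<in>?B (Suc k) - U. \<forall>i<m. coef cell w k (fst (M!i)) \<tau> = 0"
      using Suc by auto
    have tk: "take (Suc m) M = take m M @ [M!m]" using m by (simp add: take_Suc_conv_app_nth)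
    define f where "f = (\<lambda>t. if t \<in> U then t else
       (\<lambda>x. t x - coef cell w k (fst (M!m)) t / coef cell w k (fst (M!m)) (snd (M!m)) * snd (M!m) x))"
    have eq: "foldl st B (take (Suc m) M) = ?B (Suc k := f ` ?B (Suc k))"
      unfolding tk by (simp add: st_def cob_step_def f_def)
    have nz: "coef cell w k (fst (M!m)) (snd (M!m)) \<noteq> 0" using inM m by blast
    have "\<forall>\<tau>\<in>f ` ?B (Suc k) - U. \<forall>i<Suc m. coef cell w k (fst (M!i)) \<tau> = 0"
    proof (intro ballI allI impI)
      fix \<tau> i assume t: "\<tau> \<in> f ` ?B (Suc k) - U" and i: "i < Suc m"
      then obtain t where t0: "t \<in> ?B (Suc k)" and tf: "\<tau> = f t" by auto
      have tU: "t \<notin> U" using t tf f_def by auto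
      have \<tau>: "\<tau> = (\<lambda>x. t x - coef cell w k (fst (M!m)) t / coef cell w k (fst (M!m)) (snd (M!m)) * snd (M!m) x)"
        using tf tU f_def by simp
      show "coef cell w k (fst (M!i)) \<tau> = 0"
      proof (cases "i = m")
        case True
        then show ?thesis using nz unfolding \<tau> coef_lin by simp
      next
        case False
        then have "i < m" using i by simp
        then have "coef cell w k (fst (M!i)) t = 0" "coef cell w k (fst (M!i)) (snd (M!m)) = 0"
          using IH(3) t0 tU assms(5) m unfolding incident_def by auto
        then show ?thesis unfolding \<tau> coef_lin by simp
      qed
    qed
    moreover have "U \<subseteq> f ` ?B (Suc k)"
    proof
      fix u assume "u \<in> U"
      then have "f u = u" "u \<in> ?B (Suc k)" using IH(2) f_def by auto
      then show "u \<in> f ` ?B (Suc k)" by force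
    qed
    ultimately show ?case unfolding eq using IH by simp
  qed
  from inv[of "length M"] have main: "change_basis cell w k B M k = B k"
    "U \<subseteq> change_basis cell w k B M (Suc k)"
    "\<forall>\<tau>\<in>change_basis cell w k B M (Suc k) - U. \<forall>i<length M. coef cell w k (fst (M!i)) \<tau> = 0"
    by (auto simp: change_basis_def st_def U_def)
  define A where "A = mat (length M) (length M) (\<lambda>(i, j). coef cell w k (fst (M ! j)) (snd (M ! i)))"
  have ut: "upper_triangular A"
    unfolding upper_triangular_def A_def using assms(5) unfolding incident_def by auto
  have "invertible_mat A"
    by (rule inv_ut[OF _ ut, of "length M"]) (auto simp: A_def inM)
  moreover have "set (map fst M) \<subseteq> B k" using inM by (force simp: in_set_conv_nth)
  moreover have "\<forall>\<tau>\<in>change_basis cell w k B M (Suc k) - U. \<forall>\<sigma>\<in>set (map fst M). coef cell w k \<sigma> \<tau> = 0"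
    using main(3) by (force simp: in_set_conv_nth)
  ultimately show ?thesis using main ut unfolding Let_def A_def U_def by simp
qed

end
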